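(* Let $(F,\mathrm{wt})$ and $(F',\mathrm{wt}')$ be weighted forests such that $\tilde{\mathbf{X}}_F=\tilde{\mathbf{X}}_{F'}$. Then $\tilde{\mathbf{G}}_F=\tilde{\mathbf{G}}_{F'}$. In other words, the extended generalized degree polynomial $\tilde{\mathbf{G}}_F$ of a weighted forest is determined by its chromatic MacMahon symmetric function $\tilde{\mathbf{X}}_F$.
   Context: All graphs are finite, simple and undirected. A weighted graph $(G,\mathrm{wt})=(V,E,\mathrm{wt})$ is a graph $G=(V,E)$ together with a function $\mathrm{wt}\colon V\to\mathbb{P}$, where $\mathbb{P}$ is the set of positive integers; for $A\subseteq V$ write $\mathrm{wt}(A)=\sum_{v\in A}\mathrm{wt}(v)$. A weighted forest is a weighted graph whose underlying graph is acyclic. A proper coloring of $G$ is a map $\kappa\colon V\to\mathbb{P}$ with $\kappa(u)\neq\kappa(v)$ whenever $uv\in E$; $\mathrm{Col}(G)$ denotes the set of proper colorings. The chromatic MacMahon symmetric function of $(G,\mathrm{wt})$ is the formal power series in two alphabets of commuting indeterminates $x_1,x_2,\dots$ and $y_1,y_2,\dots$ $$\tilde{\mathbf{X}}_G=\sum_{\kappa\in\mathrm{Col}(G)}\prod_{v\in V}x_{\kappa(v)}\,y_{\kappa(v)}^{\mathrm{wt}(v)}.$$ For $A\subseteq V$, an edge is internal to $A$ if both endpoints lie in $A$ and external to $A$ if exactly one endpoint lies in $A$; $\mathrm{int}(A)$ and $\mathrm{ext}(A)$ denote the numbers of internal and external edges. The extended generalized degree polynomial of $(G,\mathrm{wt})$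 is $$\tilde{\mathbf{G}}_G(w,x,y,z)=\sum_{A\subseteq V}w^{\mathrm{ext}(A)}x^{|A|}y^{\mathrm{wt}(A)}z^{\mathrm{int}(A)}.$$ *)

theory Defs
  imports Main "HOL-Library.FuncSet"
begin

definition simple_graph :: "'a set \<Rightarrow> 'a set set \<Rightarrow> bool" where
  "simple_graph V E \<longleftrightarrow> finite V \<and>
     (\<forall>e\<in>E. \<exists>u v. u \<in> V \<and> v \<in> V \<and> u \<noteq> v \<and> e = {u, v})"

definition is_cycle :: "'a set \<Rightarrow> 'a set set \<Rightarrow> 'a list \<Rightarrow> bool" where
  "is_cycle V E cs \<longleftrightarrow> length cs \<ge> 3 \<and> distinct cs \<and> set cs \<subseteq> V \<and>
     (\<forall>i < length cs. {cs ! i, cs ! ((i + 1) mod length cs)} \<in> E)"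

definition forest :: "'a set \<Rightarrow> 'a set set \<Rightarrow> bool" where
  "forest V E \<longleftrightarrow> simple_graph V E \<and> \<not> (\<exists>cs. is_cycle V E cs)"

definition weighted_forest :: "'a set \<Rightarrow> 'a set set \<Rightarrow> ('a \<Rightarrow> nat) \<Rightarrow> bool" where
  "weighted_forest V E wt \<longleftrightarrow> forest V E \<and> (\<forall>v\<in>V. wt v > 0)"

definition proper_colorings :: "'a set \<Rightarrow> 'a set set \<Rightarrow> ('a \<Rightarrow> nat) set" where
  "proper_colorings V E =
     {\<kappa> \<in> V \<rightarrow>\<^sub>E {1..}. \<forall>u v. {u, v} \<in> E \<longrightarrow> \<kappa> u \<noteq> \<kappa> v}"

text \<open>A monomial \<open>\<Prod>\<^sub>c x_c^(a_c) y_c^(b_c)\<close> is encoded by its exponent map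
  \<open>m c = (a_c, b_c)\<close>; the coefficient is the number of proper colorings \<kappa> with
  \<open>(|\<kappa>\<inverse>(c)|, wt(\<kappa>\<inverse>(c))) = m c\<close> for every colour c.\<close>
definition chromatic_macmahon ::
    "'a set \<Rightarrow> 'a set set \<Rightarrow> ('a \<Rightarrow> nat) \<Rightarrow> (nat \<Rightarrow> nat \<times> nat) \<Rightarrow> nat" where
  "chromatic_macmahon V E wt m =
     card {\<kappa> \<in> proper_colorings V E.
             (\<lambda>c. (card {v \<in> V. \<kappa> v = c}, sum wt {v \<in> V. \<kappa> v = c})) = m}"

definition int_edges :: "'a set set \<Rightarrow> 'a set \<Rightarrow> nat" where
  "int_edges E A = card {e \<in> E. e \<subseteq> A}"

definition ext_edges :: "'a set set \<Rightarrow> 'a set \<Rightarrow> nat" where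
  "ext_edges E A = card {e \<in> E. card (e \<inter> A) = 1}"

text \<open>The extended generalized degree polynomial, represented by its coefficient function:
  the coefficient of \<open>w^a x^b y^c z^d\<close> is the number of A \<subseteq> V with
  ext(A)=a, |A|=b, wt(A)=c, int(A)=d.\<close>
definition ext_gen_degree_poly ::
    "'a set \<Rightarrow> 'a set set \<Rightarrow> ('a \<Rightarrow> nat) \<Rightarrow> nat \<times> nat \<times> nat \<times> nat \<Rightarrow> nat" where
  "ext_gen_degree_poly V E wt =
     (\<lambda>(a, b, c, d). card {A. A \<subseteq> V \<and> ext_edges E A = a \<and> card A = b \<and>
                               sum wt A = c \<and> int_edges E A = d})"

end

theory Submission
  imports Defs Complex_Main
begin

lemma edge_form:
  assumes "simple_graph V E" "e \<in> E"
  shows "\<exists>u v. u \<in> V \<and> v \<in> V \<and> u \<noteq> v \<and> e = {u, v}"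
  using assms unfolding simple_graph_def by blast

lemma forest_leaf:
  assumes F: "forest V E" and UV: "U \<subseteq> V" and Une: "U \<noteq> {}"
  shows "\<exists>v\<in>U. \<forall>e1\<in>E. \<forall>e2\<in>E. e1 \<subseteq> U \<longrightarrow> e2 \<subseteq> U \<longrightarrow> v \<in> e1 \<longrightarrow> v \<in> e2 \<longrightarrow> e1 = e2"
proof -
  have SG: "simple_graph V E" and NC: "\<not> (\<exists>cs. is_cycle V E cs)" using F unfolding forest_def by auto
  have finU: "finite U" using SG UV finite_subset unfolding simple_graph_def by blast
  define P where "P xs \<longleftrightarrow> xs \<noteq> [] \<and> distinct xs \<and> set xs \<subseteq> U \<and> (\<forall>i. Suc i < length xs \<longrightarrow> {xs!i, xs!Suc i} \<in> E)" for xs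
  have bound: "length xs \<le> card U" if "P xs" for xs
    using that unfolding P_def by (metis card_mono distinct_card finU)
  obtain u where "u \<in> U" using Une by blast
  then have "P [u]" unfolding P_def by auto
  have "\<exists>x. P x \<and> (\<forall>y. P y \<longrightarrow> length y \<le> length x)"
    by (rule Lattices_Big.ex_has_greatest_nat[where f=length and b="Suc (card U)"])
      (use \<open>P [u]\<close> bound in \<open>auto simp: less_Suc_eq_le\<close>)
  then obtain xs where Pxs: "P xs" and mx: "\<And>ys. P ys \<Longrightarrow> length ys \<le> length xs"
    by blast
  define v where "v = xs ! 0"
  have xsne: "xs \<noteq> []" and dxs: "distinct xs" and sxs: "set xs \<subseteq> U"
    and exs: "\<And>i. Suc i < length xs \<Longrightarrow> {xs!i, xs!Suc i} \<in> E" using Pxs unfolding P_def by auto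
  have vU: "v \<in> U" using xsne sxs v_def by (simp add: subset_iff)
  have inxs: "y \<in> set xs" if "{v, y} \<in> E" "{v, y} \<subseteq> U" for y
  proof (rule ccontr)
    assume ny: "y \<notin> set xs"
    have "P (y # xs)" unfolding P_def
    proof (intro conjI allI impI)
      show "distinct (y # xs)" using ny dxs by simp
      show "set (y # xs) \<subseteq> U" using sxs that by auto
    next
      fix i assume i: "Suc i < length (y # xs)"
      show "{(y # xs) ! i, (y # xs) ! Suc i} \<in> E"
      proof (cases i)
        case 0 then show ?thesis using that v_def by (simp add: insert_commute)
      next
        case (Suc k) then show ?thesis using exs i by simp
      qed
    qed simp
    then show False using mx[of "y # xs"] by simp
  qed
  have "\<forall>e1\<in>E. \<forall>e2\<in>E. e1 \<subseteq> U \<longrightarrow> e2 \<subseteq> U \<longrightarrow> v \<in> e1 \<longrightarrow> v \<in> e2 \<longrightarrow> e1 = e2"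
  proof (intro ballI impI, rule ccontr)
    fix e1 e2 assume e1: "e1 \<in> E" and e2: "e2 \<in> E" and s1: "e1 \<subseteq> U" and s2: "e2 \<subseteq> U"
      and v1: "v \<in> e1" and v2: "v \<in> e2" and ne: "e1 \<noteq> e2"
    obtain y1 where y1: "e1 = {v, y1}" "y1 \<noteq> v"
      using edge_form[OF SG e1] v1 by (metis insert_commute insertE singletonD)
    obtain y2 where y2: "e2 = {v, y2}" "y2 \<noteq> v"
      using edge_form[OF SG e2] v2 by (metis insert_commute insertE singletonD)
    have "y1 \<in> set xs" using inxs y1 e1 s1 by auto
    then obtain i1 where i1: "i1 < length xs" "xs ! i1 = y1" by (meson in_set_conv_nth)
    have "y2 \<in> set xs" using inxs y2 e2 s2 by auto
    then obtain i2 where i2: "i2 < length xs" "xs ! i2 = y2" by (meson in_set_conv_nth)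
    have "i1 \<noteq> 0" proof assume "i1 = 0" then show False using i1 y1 v_def by simp qed
    moreover have "i2 \<noteq> 0" proof assume "i2 = 0" then show False using i2 y2 v_def by simp qed
    moreover have "i1 \<noteq> i2" using i1 i2 y1 y2 ne by auto
    ultimately obtain i where i: "2 \<le> i" "i < length xs" "{v, xs ! i} \<in> E"
      using i1 i2 y1 y2 e1 e2
      by (metis One_nat_def Suc_1 Suc_leI less_Suc_eq_0_disj less_one linorder_neqE_nat not_le)
    define cs where "cs = take (Suc i) xs"
    have lcs: "length cs = Suc i" using i cs_def by simp
    have "is_cycle V E cs" unfolding is_cycle_def
    proof (intro conjI allI impI)
      show "3 \<le> length cs" using lcs i by simp
      show "distinct cs" using dxs cs_def by simp
      show "set cs \<subseteq> V" using sxs UV cs_def by (meson order_trans set_take_subset)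
    next
      fix j assume j: "j < length cs"
      show "{cs ! j, cs ! ((j + 1) mod length cs)} \<in> E"
      proof (cases "j = i")
        case True
        then have "(j + 1) mod length cs = 0" using lcs by simp
        then show ?thesis using True i cs_def v_def lcs by (simp add: insert_commute)
      next
        case False
        then have jl: "j < i" using j lcs by simp
        then have "(j + 1) mod length cs = Suc j" using lcs by simp
        then show ?thesis using jl exs[of j] i cs_def by simp
      qed
    qed
    then show False using NC by blast
  qed
  then show ?thesis using vU by blast
qed


definition colU :: "'a set set \<Rightarrow> 'a set \<Rightarrow> 'b set \<Rightarrow> ('a \<Rightarrow> 'b) set" where
  "colU E U C = {\<kappa> \<in> U \<rightarrow>\<^sub>E C. \<forall>u v. {u,v} \<in> E \<longrightarrow> u \<in> U \<longrightarrow> v \<in> U \<longrightarrow> \<kappa> u \<noteq> \<kappa> v}"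

lemma finite_colU: "finite U \<Longrightarrow> finite C \<Longrightarrow> finite (colU E U C)"
  unfolding colU_def using finite_PiE[of U "\<lambda>_. C"] by (auto intro: rev_finite_subset)

lemma chrom_forest:
  assumes F: "forest V E" and finC: "finite C"
  shows "U \<subseteq> V \<Longrightarrow> card (colU E U C) = card C ^ (card U - int_edges E U) * (card C - 1) ^ int_edges E U
     \<and> int_edges E U \<le> card U"
proof (induction "card U" arbitrary: U rule: less_induct)
  case less
  have SG: "simple_graph V E" using F unfolding forest_def by auto
  have finU: "finite U" using SG less.prems finite_subset unfolding simple_graph_def by blast
  show ?case
  proof (cases "U = {}")
    case True
    have ee: "{e \<in> E. e \<subseteq> U} = {}" using True edge_form[OF SG] by fastforce
    have i0: "int_edges E U = 0" unfolding int_edges_def ee by simp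
    have "colU E U C = {\<lambda>_. undefined}" using True unfolding colU_def by auto
    then show ?thesis using i0 True by simp
  next
    case False
    obtain v where vU: "v \<in> U" and leaf: "\<forall>e1\<in>E. \<forall>e2\<in>E. e1 \<subseteq> U \<longrightarrow> e2 \<subseteq> U \<longrightarrow> v \<in> e1 \<longrightarrow> v \<in> e2 \<longrightarrow> e1 = e2"
      using forest_leaf[OF F less.prems False] by blast
    define U' where "U' = U - {v}"
    have cU': "card U' < card U" using vU finU U'_def by (metis card_Diff1_less)
    have U'V: "U' \<subseteq> V" using less.prems U'_def by auto
    have IH: "card (colU E U' C) = card C ^ (card U' - int_edges E U') * (card C - 1) ^ int_edges E U'"
      "int_edges E U' \<le> card U'" using less.hyps[OF cU' U'V] by auto
    define D where "D = {e \<in> E. e \<subseteq> U \<and> v \<in> e}"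
    have Dcases: "D = {} \<or> (\<exists>e. D = {e})" using leaf unfolding D_def by blast
    have split: "{e \<in> E. e \<subseteq> U} = {e \<in> E. e \<subseteq> U'} \<union> D" unfolding D_def U'_def by auto
    have disj: "{e \<in> E. e \<subseteq> U'} \<inter> D = {}" unfolding D_def U'_def by auto
    have finE: "finite {e \<in> E. e \<subseteq> U}"
    proof -
      have "{e \<in> E. e \<subseteq> U} \<subseteq> Pow U" by auto
      then show ?thesis using finU finite_subset by blast
    qed
    have iU: "int_edges E U = int_edges E U' + card D"
      unfolding int_edges_def split
      by (rule card_Un_disjoint) (use finE split disj in auto)
    define allowed where "allowed \<kappa> = {c \<in> C. \<forall>u. {u,v} \<in> E \<longrightarrow> u \<in> U' \<longrightarrow> \<kappa> u \<noteq> c}" for \<kappa>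
    define f where "f = (\<lambda>(\<kappa>::'a \<Rightarrow> 'b, c). \<kappa>(v := c))"
    have img: "colU E U C = f ` Sigma (colU E U' C) allowed"
    proof
      show "colU E U C \<subseteq> f ` Sigma (colU E U' C) allowed"
      proof
        fix \<kappa> assume k: "\<kappa> \<in> colU E U C"
        have kP: "\<kappa> \<in> U \<rightarrow>\<^sub>E C" and kp: "\<And>a b. {a,b} \<in> E \<Longrightarrow> a \<in> U \<Longrightarrow> b \<in> U \<Longrightarrow> \<kappa> a \<noteq> \<kappa> b"
          using k unfolding colU_def by auto
        have "\<kappa>(v := undefined) \<in> U' \<rightarrow>\<^sub>E C" using kP unfolding U'_def by (auto simp: PiE_iff extensional_def)
        moreover have "(\<kappa>(v := undefined)) a \<noteq> (\<kappa>(v := undefined)) b" if "{a,b} \<in> E" "a \<in> U'" "b \<in> U'" for a b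
          using that kp[of a b] unfolding U'_def by auto
        ultimately have A1: "\<kappa>(v := undefined) \<in> colU E U' C" unfolding colU_def by blast
        have "\<kappa> v \<in> C" using kP vU by auto
        moreover have "(\<kappa>(v := undefined)) u \<noteq> \<kappa> v" if "{u,v} \<in> E" "u \<in> U'" for u
          using that kp[of u v] vU unfolding U'_def by auto
        ultimately have A2: "\<kappa> v \<in> allowed (\<kappa>(v := undefined))" unfolding allowed_def by blast
        have "(\<kappa>(v := undefined), \<kappa> v) \<in> Sigma (colU E U' C) allowed"
          using A1 A2 by blast
        moreover have "\<kappa> = f (\<kappa>(v := undefined), \<kappa> v)" unfolding f_def by simp
        ultimately show "\<kappa> \<in> f ` Sigma (colU E U' C) allowed" by blast
      qed
    next
      show "f ` Sigma (colU E U' C) allowed \<subseteq> colU E U C"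
      proof
        fix \<kappa> assume "\<kappa> \<in> f ` Sigma (colU E U' C) allowed"
        then obtain \<kappa>0 c where k0: "\<kappa>0 \<in> colU E U' C" and c: "c \<in> allowed \<kappa>0" and kk: "\<kappa> = \<kappa>0(v := c)"
          unfolding f_def by auto
        have "\<kappa>0 \<in> U' \<rightarrow>\<^sub>E C" "c \<in> C" using k0 c unfolding colU_def allowed_def by auto
        then have "\<kappa> \<in> U \<rightarrow>\<^sub>E C" using kk vU unfolding U'_def by (auto simp: PiE_iff extensional_def)
        moreover have "\<kappa> a \<noteq> \<kappa> b" if ab: "{a,b} \<in> E" "a \<in> U" "b \<in> U" for a b
        proof -
          have ab': "a \<noteq> b"
          proof
            assume "a = b"
            then have "{a} \<in> E" using ab by simp
            then obtain x y where "{a} = {x,y}" "x \<noteq> y" using edge_form[OF SG] by blast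
            then show False by blast
          qed
          show ?thesis
          proof (cases "a = v")
            case True
            have "{b,v} \<in> E" using ab True by (metis insert_commute)
            moreover have "b \<in> U'" using ab ab' True unfolding U'_def by auto
            ultimately show ?thesis using True ab' c kk unfolding allowed_def by auto
          next
            case False
            show ?thesis
            proof (cases "b = v")
              case True
              then show ?thesis using ab ab' c kk False unfolding allowed_def U'_def by auto
            next
              case False2: False
              then show ?thesis using ab k0 kk False unfolding colU_def U'_def by auto
            qed
          qed
        qed
        ultimately show "\<kappa> \<in> colU E U C" unfolding colU_def by blast
      qed
    qed
    have inj: "inj_on f (Sigma (colU E U' C) allowed)"
    proof (rule inj_onI)
      fix p q assume p: "p \<in> Sigma (colU E U' C) allowed" and q: "q \<in> Sigma (colU E U' C) allowed" and e: "f p = f q"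
      obtain \<kappa>1 c1 where p': "p = (\<kappa>1, c1)" by fastforce
      obtain \<kappa>2 c2 where q': "q = (\<kappa>2, c2)" by fastforce
      have v1: "\<kappa>1 v = undefined" "\<kappa>2 v = undefined" using p q p' q' unfolding colU_def U'_def PiE_def extensional_def by auto
      have eq: "\<kappa>1(v := c1) = \<kappa>2(v := c2)" using e p' q' f_def by simp
      have "c1 = c2" using fun_cong[OF eq, of v] by simp
      moreover have "\<kappa>1 x = \<kappa>2 x" for x using fun_cong[OF eq, of x] v1 by (cases "x = v") auto
      ultimately have "c1 = c2" "\<kappa>1 = \<kappa>2" by auto
      then show "p = q" using p' q' by simp
    qed
    have finU': "finite U'" using finU U'_def by simp
    have callowed: "card (allowed \<kappa>) = card C - card D" if k: "\<kappa> \<in> colU E U' C" for \<kappa>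
      using Dcases
    proof
      assume "D = {}"
      have none: "False" if "{u,v} \<in> E" "u \<in> U'" for u
      proof -
        have "{u,v} \<in> D" using that vU unfolding D_def U'_def by auto
        then show False using \<open>D = {}\<close> by simp
      qed
      have "allowed \<kappa> = C" unfolding allowed_def using none by blast
      then show ?thesis using \<open>D = {}\<close> by simp
    next
      assume "\<exists>e. D = {e}"
      then obtain e where De: "D = {e}" by blast
      then have eD: "e \<in> D" by simp
      then have "e \<in> E" "e \<subseteq> U" "v \<in> e" unfolding D_def by auto
      obtain a b where ab: "e = {a, b}" "a \<noteq> b" using edge_form[OF SG \<open>e \<in> E\<close>] by blast
      obtain u0 where e0: "e = {u0, v}" "u0 \<noteq> v" "u0 \<in> U"
      proof (cases "a = v")
        case True
        then show ?thesis using that[of b] ab \<open>e \<subseteq> U\<close> by (auto simp: insert_commute)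
      next
        case False
        then have "b = v" using ab \<open>v \<in> e\<close> by auto
        then show ?thesis using that[of a] ab \<open>e \<subseteq> U\<close> False by auto
      qed
      have u0: "u0 \<in> U'" using e0 U'_def by simp
      have "allowed \<kappa> = C - {\<kappa> u0}"
      proof -
        have "u = u0" if "{u,v} \<in> E" "u \<in> U'" for u
        proof -
          have "{u,v} \<in> D" using that vU unfolding D_def U'_def by auto
          then have "{u,v} = {u0,v}" using De e0 by simp
          then show ?thesis using that U'_def by (auto simp: doubleton_eq_iff)
        qed
        moreover have "{u0,v} \<in> E" using e0 \<open>e \<in> E\<close> by simp
        ultimately show ?thesis unfolding allowed_def using u0 by blast
      qed
      moreover have "\<kappa> u0 \<in> C" using k u0 unfolding colU_def by auto
      ultimately show ?thesis using De finC by simp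
    qed
    have "card (colU E U C) = card (Sigma (colU E U' C) allowed)"
      using img inj card_image by metis
    also have "\<dots> = (\<Sum>\<kappa>\<in>colU E U' C. card (allowed \<kappa>))"
      by (rule card_SigmaI) (use finite_colU[OF finU' finC] finC in \<open>auto simp: allowed_def\<close>)
    also have "\<dots> = card (colU E U' C) * (card C - card D)" using callowed by simp
    finally have cc: "card (colU E U C) = card (colU E U' C) * (card C - card D)" .
    have cardU: "card U = Suc (card U')" using vU finU U'_def by (metis card_Suc_Diff1)
    define k where "k = card C"
    define i' where "i' = int_edges E U'"
    define n' where "n' = card U'"
    have le: "i' \<le> n'" using IH(2) i'_def n'_def by simp
    show ?thesis using Dcases
    proof
      assume "D = {}"
      then have d0: "card D = 0" by simp
      have "card (colU E U C) = (k ^ (n' - i') * (k - 1) ^ i') * k"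
        using cc IH(1) d0 unfolding k_def i'_def n'_def by simp
      also have "\<dots> = k ^ Suc (n' - i') * (k - 1) ^ i'" by (simp only: power_Suc mult_ac)
      also have "Suc (n' - i') = card U - int_edges E U" using le cardU iU d0 n'_def i'_def by simp
      finally show ?thesis using iU d0 i'_def k_def le cardU n'_def by simp
    next
      assume "\<exists>e. D = {e}"
      then have d1: "card D = 1" by auto
      have "card (colU E U C) = (k ^ (n' - i') * (k - 1) ^ i') * (k - 1)"
        using cc IH(1) d1 unfolding k_def i'_def n'_def by simp
      also have "\<dots> = k ^ (n' - i') * (k - 1) ^ Suc i'" by (simp only: power_Suc mult_ac)
      also have "n' - i' = card U - int_edges E U" using le cardU iU d1 n'_def i'_def by simp
      also have "Suc i' = int_edges E U" using iU d1 i'_def by simp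
      finally show ?thesis using iU d1 i'_def k_def le cardU n'_def by simp
    qed
  qed
qed

definition stat :: "'a set \<Rightarrow> ('a \<Rightarrow> nat) \<Rightarrow> ('a \<Rightarrow> nat) \<Rightarrow> nat \<Rightarrow> nat \<times> nat" where
  "stat V wt \<kappa> = (\<lambda>c. (card {v\<in>V. \<kappa> v = c}, sum wt {v\<in>V. \<kappa> v = c}))"

definition MM :: "nat \<Rightarrow> nat \<Rightarrow> ((nat \<Rightarrow> nat \<times> nat) \<Rightarrow> bool) \<Rightarrow> (nat \<Rightarrow> nat \<times> nat) set" where
  "MM B R Q = {m. Q m \<and> (\<forall>c. (c \<in> {1..R} \<longrightarrow> m c \<in> {0..B} \<times> {0..B}) \<and> (c \<notin> {1..R} \<longrightarrow> m c = (0,0)))}"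

lemma finite_MM: "finite (MM B R Q)"
proof -
  have "MM B R Q \<subseteq> {m. \<forall>c. (c \<in> {1..R} \<longrightarrow> m c \<in> {0..B} \<times> {0..B}) \<and> (c \<notin> {1..R} \<longrightarrow> m c = (0,0))}"
    unfolding MM_def by blast
  moreover have "finite {m. \<forall>c. (c \<in> {1..R} \<longrightarrow> m c \<in> {0..B} \<times> {0..B}) \<and> (c \<notin> {1..R} \<longrightarrow> m c = (0,0))}"
    by (rule finite_set_of_finite_funs) auto
  ultimately show ?thesis using finite_subset by blast
qed

lemma proper_pos: "\<kappa> \<in> proper_colorings V E \<Longrightarrow> v \<in> V \<Longrightarrow> 1 \<le> \<kappa> v"
  unfolding proper_colorings_def by auto

lemma transfer_one:
  assumes finV: "finite V" and B1: "card V \<le> B" and B2: "sum wt V \<le> B"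
    and hQ: "\<And>m c. Q m \<Longrightarrow> c > R \<Longrightarrow> m c = (0,0)"
  shows "card {\<kappa> \<in> proper_colorings V E. Q (stat V wt \<kappa>)} = (\<Sum>m\<in>MM B R Q. chromatic_macmahon V E wt m)"
proof -
  define fib where "fib m = {\<kappa> \<in> proper_colorings V E. stat V wt \<kappa> = m}" for m
  have eq: "{\<kappa> \<in> proper_colorings V E. Q (stat V wt \<kappa>)} = (\<Union>m\<in>MM B R Q. fib m)"
  proof
    show "{\<kappa> \<in> proper_colorings V E. Q (stat V wt \<kappa>)} \<subseteq> (\<Union>m\<in>MM B R Q. fib m)"
    proof
      fix \<kappa> assume k: "\<kappa> \<in> {\<kappa> \<in> proper_colorings V E. Q (stat V wt \<kappa>)}"
      have "stat V wt \<kappa> \<in> MM B R Q" unfolding MM_def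
      proof (intro CollectI conjI allI impI)
        show "Q (stat V wt \<kappa>)" using k by simp
      next
        fix c assume "c \<in> {1..R}"
        have "card {v\<in>V. \<kappa> v = c} \<le> card V" using finV by (intro card_mono) auto
        moreover have "sum wt {v\<in>V. \<kappa> v = c} \<le> sum wt V" using finV by (intro sum_mono2) auto
        ultimately show "stat V wt \<kappa> c \<in> {0..B} \<times> {0..B}" using B1 B2 unfolding stat_def by auto
      next
        fix c assume c: "c \<notin> {1..R}"
        show "stat V wt \<kappa> c = (0,0)"
        proof (cases "c = 0")
          case True
          then have e0: "{v\<in>V. \<kappa> v = c} = {}" using proper_pos[of \<kappa> V E] k by fastforce
          show ?thesis unfolding stat_def e0 by simp
        next
          case False
          then show ?thesis using hQ[of "stat V wt \<kappa>" c] k c by auto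
        qed
      qed
      then show "\<kappa> \<in> (\<Union>m\<in>MM B R Q. fib m)" using k unfolding fib_def by blast
    qed
  next
    show "(\<Union>m\<in>MM B R Q. fib m) \<subseteq> {\<kappa> \<in> proper_colorings V E. Q (stat V wt \<kappa>)}"
      unfolding fib_def MM_def by auto
  qed
  have finfib: "finite (fib m)" if m: "m \<in> MM B R Q" for m
  proof -
    have "fib m \<subseteq> V \<rightarrow>\<^sub>E {1..R}"
    proof
      fix \<kappa> assume k: "\<kappa> \<in> fib m"
      have "\<kappa> v \<in> {1..R}" if v: "v \<in> V" for v
      proof (rule ccontr)
        assume nv: "\<kappa> v \<notin> {1..R}"
        have "m (\<kappa> v) = (0,0)" using m nv unfolding MM_def by auto
        then have "card {u\<in>V. \<kappa> u = \<kappa> v} = 0" using k unfolding fib_def stat_def by auto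
        then have "{u\<in>V. \<kappa> u = \<kappa> v} = {}" using finV by simp
        then show False using v by auto
      qed
      moreover have "\<kappa> \<in> extensional V" using k unfolding fib_def proper_colorings_def by (auto simp: PiE_iff)
      ultimately show "\<kappa> \<in> V \<rightarrow>\<^sub>E {1..R}" by (simp add: PiE_iff)
    qed
    moreover have "finite (V \<rightarrow>\<^sub>E {1..R})" using finV by (intro finite_PiE) auto
    ultimately show ?thesis using finite_subset by blast
  qed
  have "card (\<Union>m\<in>MM B R Q. fib m) = (\<Sum>m\<in>MM B R Q. card (fib m))"
    by (rule card_UN_disjoint) (use finite_MM finfib in \<open>auto simp: fib_def\<close>)
  then show ?thesis using eq unfolding fib_def chromatic_macmahon_def stat_def by simp
qed

lemma transfer:
  assumes finV: "finite V" and finV': "finite V'"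
    and cm: "chromatic_macmahon V E wt = chromatic_macmahon V' E' wt'"
    and hQ: "\<And>m c. Q m \<Longrightarrow> c > R \<Longrightarrow> m c = (0,0)"
  shows "card {\<kappa> \<in> proper_colorings V E. Q (stat V wt \<kappa>)} = card {\<kappa> \<in> proper_colorings V' E'. Q (stat V' wt' \<kappa>)}"
proof -
  define B where "B = card V + sum wt V + card V' + sum wt' V'"
  have "card {\<kappa> \<in> proper_colorings V E. Q (stat V wt \<kappa>)} = (\<Sum>m\<in>MM B R Q. chromatic_macmahon V E wt m)"
    by (rule transfer_one) (use finV hQ in \<open>auto simp: B_def\<close>)
  also have "\<dots> = (\<Sum>m\<in>MM B R Q. chromatic_macmahon V' E' wt' m)" using cm by simp
  also have "\<dots> = card {\<kappa> \<in> proper_colorings V' E'. Q (stat V' wt' \<kappa>)}"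
    by (rule transfer_one[symmetric]) (use finV' hQ in \<open>auto simp: B_def\<close>)
  finally show ?thesis .
qed

definition SS :: "'a set \<Rightarrow> 'a set set \<Rightarrow> ('a \<Rightarrow> nat) \<Rightarrow> nat \<Rightarrow> nat \<Rightarrow> nat \<Rightarrow> nat \<Rightarrow> ('a \<Rightarrow> nat) set" where
  "SS V E wt r1 r2 b w = {\<kappa> \<in> proper_colorings V E. (\<forall>v\<in>V. \<kappa> v \<le> r1 + r2) \<and>
      card {v\<in>V. \<kappa> v \<le> r1} = b \<and> sum wt {v\<in>V. \<kappa> v \<le> r1} = w}"

definition QQ :: "nat \<Rightarrow> nat \<Rightarrow> nat \<Rightarrow> nat \<Rightarrow> (nat \<Rightarrow> nat \<times> nat) \<Rightarrow> bool" where
  "QQ r1 r2 b w m = ((\<forall>c. c > r1 + r2 \<longrightarrow> m c = (0,0)) \<and> (\<Sum>c\<in>{1..r1}. fst (m c)) = b \<and> (\<Sum>c\<in>{1..r1}. snd (m c)) = w)"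

lemma group_lemma:
  fixes h :: "'a \<Rightarrow> nat"
  assumes finV: "finite V" and k: "\<kappa> \<in> proper_colorings V E"
  shows "(\<Sum>c\<in>{1..r}. sum h {v\<in>V. \<kappa> v = c}) = sum h {v\<in>V. \<kappa> v \<le> r}"
proof -
  have "(\<Sum>c\<in>{1..r}. sum h {v\<in>{v\<in>V. \<kappa> v \<le> r}. \<kappa> v = c}) = sum h {v\<in>V. \<kappa> v \<le> r}"
    by (rule sum.group) (use finV proper_pos[OF k] in auto)
  moreover have "{v\<in>{v\<in>V. \<kappa> v \<le> r}. \<kappa> v = c} = {v\<in>V. \<kappa> v = c}" if "c \<in> {1..r}" for c
    using that by auto
  ultimately show ?thesis by simp
qed

lemma SS_Q:
  assumes finV: "finite V"
  shows "SS V E wt r1 r2 b w = {\<kappa> \<in> proper_colorings V E. QQ r1 r2 b w (stat V wt \<kappa>)}"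
proof -
  have "((\<forall>v\<in>V. \<kappa> v \<le> r1 + r2) \<and> card {v\<in>V. \<kappa> v \<le> r1} = b \<and> sum wt {v\<in>V. \<kappa> v \<le> r1} = w)
     = QQ r1 r2 b w (stat V wt \<kappa>)" if k: "\<kappa> \<in> proper_colorings V E" for \<kappa>
  proof -
    have A: "(\<forall>v\<in>V. \<kappa> v \<le> r1 + r2) = (\<forall>c. c > r1 + r2 \<longrightarrow> stat V wt \<kappa> c = (0,0))"
    proof
      assume H: "\<forall>v\<in>V. \<kappa> v \<le> r1 + r2"
      show "\<forall>c. c > r1 + r2 \<longrightarrow> stat V wt \<kappa> c = (0,0)"
      proof (intro allI impI)
        fix c assume "c > r1 + r2"
        then have e0: "{v\<in>V. \<kappa> v = c} = {}" using H by force
        show "stat V wt \<kappa> c = (0,0)" unfolding stat_def e0 by simp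
      qed
    next
      assume H: "\<forall>c. c > r1 + r2 \<longrightarrow> stat V wt \<kappa> c = (0,0)"
      show "\<forall>v\<in>V. \<kappa> v \<le> r1 + r2"
      proof (rule ccontr)
        assume "\<not> (\<forall>v\<in>V. \<kappa> v \<le> r1 + r2)"
        then obtain v where v: "v \<in> V" "\<kappa> v > r1 + r2" by force
        then have "card {u\<in>V. \<kappa> u = \<kappa> v} = 0" using H unfolding stat_def by auto
        then have "{u\<in>V. \<kappa> u = \<kappa> v} = {}" using finV by simp
        then show False using v by auto
      qed
    qed
    have B: "(\<Sum>c\<in>{1..r1}. fst (stat V wt \<kappa> c)) = card {v\<in>V. \<kappa> v \<le> r1}"
      using group_lemma[OF finV k, where r=r1 and h="\<lambda>_. 1"] unfolding stat_def by simp
    have C: "(\<Sum>c\<in>{1..r1}. snd (stat V wt \<kappa> c)) = sum wt {v\<in>V. \<kappa> v \<le> r1}"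
      using group_lemma[OF finV k, where r=r1 and h=wt] unfolding stat_def by simp
    show ?thesis unfolding QQ_def A B C by simp
  qed
  then show ?thesis unfolding SS_def by auto
qed

lemma SS_card:
  assumes SG: "simple_graph V E"
  shows "card (SS V E wt r1 r2 b w) =
    (\<Sum>A\<in>{A. A \<subseteq> V \<and> card A = b \<and> sum wt A = w}. card (colU E A {1..r1}) * card (colU E (V - A) {r1+1..r1+r2}))"
proof -
  have finV: "finite V" using SG unfolding simple_graph_def by auto
  define R where "R = r1 + r2"
  define AA where "AA = {A. A \<subseteq> V \<and> card A = b \<and> sum wt A = w}"
  define F where "F A = {\<kappa> \<in> proper_colorings V E. (\<forall>v\<in>V. \<kappa> v \<le> R) \<and> {v\<in>V. \<kappa> v \<le> r1} = A}" for A
  have eq: "SS V E wt r1 r2 b w = (\<Union>A\<in>AA. F A)"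
    unfolding SS_def AA_def F_def R_def by auto
  have finAA: "finite AA" unfolding AA_def using finV by (auto intro: rev_finite_subset[of "Pow V"])
  have finF: "finite (F A)" for A
  proof -
    have "F A \<subseteq> V \<rightarrow>\<^sub>E {1..R}" unfolding F_def proper_colorings_def by (auto simp: PiE_iff extensional_def)
    moreover have "finite (V \<rightarrow>\<^sub>E {1..R})" using finV by (intro finite_PiE) auto
    ultimately show ?thesis using finite_subset by blast
  qed
  have cardF: "card (F A) = card (colU E A {1..r1}) * card (colU E (V - A) {r1+1..r1+r2})" if A: "A \<subseteq> V" for A
  proof -
    define h where "h = (\<lambda>(\<kappa>1::'a \<Rightarrow> nat, \<kappa>2::'a \<Rightarrow> nat). (\<lambda>v. if v \<in> A then \<kappa>1 v else \<kappa>2 v))"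
    define P where "P = colU E A {1..r1} \<times> colU E (V - A) {r1+1..r1+r2}"
    have inj: "inj_on h P"
    proof (rule inj_onI)
      fix p q assume p: "p \<in> P" and q: "q \<in> P" and e: "h p = h q"
      obtain a1 a2 where p': "p = (a1, a2)" by fastforce
      obtain b1 b2 where q': "q = (b1, b2)" by fastforce
      have ext: "a1 \<in> extensional A" "b1 \<in> extensional A" "a2 \<in> extensional (V - A)" "b2 \<in> extensional (V - A)"
        using p q p' q' unfolding P_def colU_def by (auto simp: PiE_iff)
      have "a1 x = b1 x \<and> a2 x = b2 x" for x
      proof (cases "x \<in> A")
        case True
        then show ?thesis using fun_cong[OF e, of x] p' q' ext unfolding h_def extensional_def by auto
      next
        case False
        then show ?thesis using fun_cong[OF e, of x] p' q' ext unfolding h_def extensional_def by auto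
      qed
      then show "p = q" using p' q' by auto
    qed
    have img: "h ` P = F A"
    proof
      show "h ` P \<subseteq> F A"
      proof
        fix \<kappa> assume "\<kappa> \<in> h ` P"
        then obtain k1 k2 where k1: "k1 \<in> colU E A {1..r1}" and k2: "k2 \<in> colU E (V - A) {r1+1..r1+r2}"
          and kk: "\<kappa> = (\<lambda>v. if v \<in> A then k1 v else k2 v)" unfolding h_def P_def by auto
        have k1P: "k1 \<in> A \<rightarrow>\<^sub>E {1..r1}" and k1p: "\<And>u v. {u,v} \<in> E \<Longrightarrow> u \<in> A \<Longrightarrow> v \<in> A \<Longrightarrow> k1 u \<noteq> k1 v"
          using k1 unfolding colU_def by auto
        have k2P: "k2 \<in> (V - A) \<rightarrow>\<^sub>E {r1+1..r1+r2}" and k2p: "\<And>u v. {u,v} \<in> E \<Longrightarrow> u \<in> V - A \<Longrightarrow> v \<in> V - A \<Longrightarrow> k2 u \<noteq> k2 v"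
          using k2 unfolding colU_def by auto
        have val: "\<kappa> v \<in> (if v \<in> A then {1..r1} else {r1+1..r1+r2})" if "v \<in> V" for v
          using that k1P k2P kk by auto
        have "\<kappa> \<in> V \<rightarrow>\<^sub>E {1..}"
        proof -
          have "\<kappa> v \<in> {1..}" if "v \<in> V" for v using val[OF that] by (auto split: if_splits)
          moreover have "\<kappa> v = undefined" if "v \<notin> V" for v using that A k2P kk by (auto simp: PiE_iff extensional_def)
          ultimately show ?thesis by (auto simp: PiE_iff extensional_def)
        qed
        moreover have "\<kappa> u \<noteq> \<kappa> v" if e: "{u,v} \<in> E" for u v
        proof -
          obtain x y where xy: "x \<in> V" "y \<in> V" "{u,v} = {x,y}" using edge_form[OF SG e] by blast
          then have uv: "u \<in> V" "v \<in> V" by (auto simp: doubleton_eq_iff)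
          show ?thesis
          proof (cases "u \<in> A")
            case True
            show ?thesis
            proof (cases "v \<in> A")
              case True
              then show ?thesis using \<open>u \<in> A\<close> k1p[OF e] kk by auto
            next
              case False
              then show ?thesis using \<open>u \<in> A\<close> val[OF uv(1)] val[OF uv(2)] by auto
            qed
          next
            case False
            show ?thesis
            proof (cases "v \<in> A")
              case True
              then show ?thesis using \<open>u \<notin> A\<close> val[OF uv(1)] val[OF uv(2)] by auto
            next
              case False
              then show ?thesis using \<open>u \<notin> A\<close> k2p[OF e] kk uv by auto
            qed
          qed
        qed
        moreover have "\<forall>v\<in>V. \<kappa> v \<le> R"
        proof
          fix v assume "v \<in> V" then show "\<kappa> v \<le> R" using val[of v] unfolding R_def by (cases "v \<in> A") auto
        qed
        moreover have "{v\<in>V. \<kappa> v \<le> r1} = A"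
        proof
          show "{v\<in>V. \<kappa> v \<le> r1} \<subseteq> A"
          proof
            fix x assume "x \<in> {v\<in>V. \<kappa> v \<le> r1}" then show "x \<in> A" using val[of x] by (cases "x \<in> A") auto
          qed
          show "A \<subseteq> {v\<in>V. \<kappa> v \<le> r1}"
          proof
            fix x assume "x \<in> A" then show "x \<in> {v\<in>V. \<kappa> v \<le> r1}" using val[of x] A by auto
          qed
        qed
        ultimately show "\<kappa> \<in> F A" unfolding F_def proper_colorings_def by blast
      qed
    next
      show "F A \<subseteq> h ` P"
      proof
        fix \<kappa> assume k: "\<kappa> \<in> F A"
        have kP: "\<kappa> \<in> V \<rightarrow>\<^sub>E {1..}" and kp: "\<And>u v. {u,v} \<in> E \<Longrightarrow> \<kappa> u \<noteq> \<kappa> v"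
          and kR: "\<forall>v\<in>V. \<kappa> v \<le> R" and kA: "{v\<in>V. \<kappa> v \<le> r1} = A"
          using k unfolding F_def proper_colorings_def by auto
        have "restrict \<kappa> A \<in> colU E A {1..r1}"
          unfolding colU_def using kP kp kA A by (auto simp: PiE_iff)
        moreover have "restrict \<kappa> (V - A) \<in> colU E (V - A) {r1+1..r1+r2}"
          unfolding colU_def using kP kp kA kR R_def by (auto simp: PiE_iff)
        moreover have "\<kappa> = h (restrict \<kappa> A, restrict \<kappa> (V - A))"
        proof
          fix x show "\<kappa> x = h (restrict \<kappa> A, restrict \<kappa> (V - A)) x"
            using kP A unfolding h_def by (auto simp: PiE_iff extensional_def)
        qed
        ultimately show "\<kappa> \<in> h ` P" unfolding P_def by blast
      qed
    qed
    have "card (F A) = card P" using img inj card_image by metis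
    then show ?thesis unfolding P_def by (simp add: card_cartesian_product)
  qed
  have "card (SS V E wt r1 r2 b w) = (\<Sum>A\<in>AA. card (F A))"
    unfolding eq by (rule card_UN_disjoint) (use finAA finF in \<open>auto simp: F_def\<close>)
  also have "\<dots> = (\<Sum>A\<in>AA. card (colU E A {1..r1}) * card (colU E (V - A) {r1+1..r1+r2}))"
    by (rule sum.cong) (use cardF in \<open>auto simp: AA_def\<close>)
  finally show ?thesis unfolding AA_def .
qed

definition AA :: "'a set \<Rightarrow> ('a \<Rightarrow> nat) \<Rightarrow> nat \<Rightarrow> nat \<Rightarrow> 'a set set" where
  "AA V wt b w = {A. A \<subseteq> V \<and> card A = b \<and> sum wt A = w}"

definition KK :: "'a set \<Rightarrow> 'a set set \<Rightarrow> ('a \<Rightarrow> nat) \<Rightarrow> nat \<Rightarrow> nat \<Rightarrow> nat \<Rightarrow> nat \<Rightarrow> nat" where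
  "KK V E wt b w i j = card {A \<in> AA V wt b w. int_edges E A = i \<and> int_edges E (V - A) = j}"

lemma finite_AA: "finite V \<Longrightarrow> finite (AA V wt b w)"
  unfolding AA_def by (auto intro: rev_finite_subset[of "Pow V"])

lemma forest_sg: "forest V E \<Longrightarrow> simple_graph V E" unfolding forest_def by auto
lemma sg_finite: "simple_graph V E \<Longrightarrow> finite V" unfolding simple_graph_def by auto
lemma sg_E_sub: "simple_graph V E \<Longrightarrow> E \<subseteq> Pow V" unfolding simple_graph_def by auto
lemma sg_finite_E: "simple_graph V E \<Longrightarrow> finite E"
  using sg_E_sub sg_finite by (metis finite_Pow_iff finite_subset)

lemma int_le_E: "simple_graph V E \<Longrightarrow> int_edges E A \<le> card E"
  unfolding int_edges_def using sg_finite_E by (intro card_mono) auto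

lemma SS_formula:
  assumes F: "forest V E"
  shows "card (SS V E wt r1 r2 b w) = (\<Sum>A\<in>AA V wt b w.
     r1 ^ (b - int_edges E A) * (r1 - 1) ^ int_edges E A *
     (r2 ^ ((card V - b) - int_edges E (V - A)) * (r2 - 1) ^ int_edges E (V - A)))"
proof -
  have SG: "simple_graph V E" using forest_sg[OF F] .
  have finV: "finite V" using sg_finite[OF SG] .
  show ?thesis unfolding SS_card[OF SG] AA_def[symmetric]
  proof (rule sum.cong[OF refl])
    fix A assume A: "A \<in> AA V wt b w"
    then have AV: "A \<subseteq> V" and cA: "card A = b" unfolding AA_def by auto
    have c1: "card (colU E A {1..r1}) = r1 ^ (b - int_edges E A) * (r1 - 1) ^ int_edges E A"
      using chrom_forest[OF F, of "{1..r1}" A] AV cA by simp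
    have cVA: "card (V - A) = card V - b" using AV cA finV by (simp add: card_Diff_subset finite_subset)
    have c2: "card (colU E (V - A) {r1+1..r1+r2}) = r2 ^ ((card V - b) - int_edges E (V - A)) * (r2 - 1) ^ int_edges E (V - A)"
      using chrom_forest[OF F, of "{r1+1..r1+r2}" "V - A"] cVA by simp
    show "card (colU E A {1..r1}) * card (colU E (V - A) {r1 + 1..r1 + r2}) =
       r1 ^ (b - int_edges E A) * (r1 - 1) ^ int_edges E A *
       (r2 ^ ((card V - b) - int_edges E (V - A)) * (r2 - 1) ^ int_edges E (V - A))"
      unfolding c1 c2 ..
  qed
qed

lemma SS_transfer:
  assumes finV: "finite V" and finV': "finite V'"
    and cm: "chromatic_macmahon V E wt = chromatic_macmahon V' E' wt'"
  shows "card (SS V E wt r1 r2 b w) = card (SS V' E' wt' r1 r2 b w)"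
  unfolding SS_Q[OF finV] SS_Q[OF finV']
  by (rule transfer[OF finV finV' cm, where R="r1 + r2"]) (auto simp: QQ_def)

lemma colU_empty_C: "colU E U {} \<noteq> {} \<Longrightarrow> U = {}"
  unfolding colU_def by (auto simp: PiE_iff)

lemma colU_empty_U: "colU E {} C = {\<lambda>_. undefined}"
  unfolding colU_def by auto

lemma AA_full: "finite V \<Longrightarrow> AA V wt (card V) (sum wt V) = {V}"
  unfolding AA_def using card_subset_eq by blast

lemma int_edges_V: "simple_graph V E \<Longrightarrow> int_edges E V = card E"
  unfolding int_edges_def using sg_E_sub by (metis (no_types, lifting) Collect_cong Pow_iff subsetD mem_Collect_eq Collect_mem_eq)

lemma SS_full:
  assumes F: "forest V E"
  shows "card (SS V E wt r 0 (card V) (sum wt V)) = r ^ (card V - card E) * (r - 1) ^ card E"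
proof -
  have SG: "simple_graph V E" using forest_sg[OF F] .
  have finV: "finite V" using sg_finite[OF SG] .
  show ?thesis
    unfolding SS_card[OF SG] AA_def[symmetric] AA_full[OF finV]
    using chrom_forest[OF F, of "{1..r}" V] int_edges_V[OF SG] by (simp add: colU_empty_U)
qed

lemma SS_other_pos:
  assumes SG: "simple_graph V E" and pos: "card (SS V E wt r 0 b w) > 0"
  shows "card V = b \<and> sum wt V = w"
proof -
  have "\<exists>A\<in>{A. A \<subseteq> V \<and> card A = b \<and> sum wt A = w}. card (colU E A {1..r}) * card (colU E (V - A) {r+1..r+0}) > 0"
  proof (rule ccontr)
    assume "\<not> ?thesis"
    then have "(\<Sum>A\<in>{A. A \<subseteq> V \<and> card A = b \<and> sum wt A = w}. card (colU E A {1..r}) * card (colU E (V - A) {r+1..r+0})) = 0"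
      by (intro sum.neutral) auto
    then show False using pos unfolding SS_card[OF SG] by simp
  qed
  then obtain A where A: "A \<in> {A. A \<subseteq> V \<and> card A = b \<and> sum wt A = w}"
    and "card (colU E A {1..r}) * card (colU E (V - A) {r+1..r+0}) > 0" by blast
  then have "card (colU E (V - A) ({}::nat set)) > 0" by simp
  then have "colU E (V - A) ({}::nat set) \<noteq> {}" by (metis card.empty less_irrefl)
  then have "V - A = {}" by (rule colU_empty_C)
  then have "A = V" using A by auto
  then show ?thesis using A by simp
qed

lemma sizes_eq:
  assumes F: "forest V E" and F': "forest V' E'"
    and cm: "chromatic_macmahon V E wt = chromatic_macmahon V' E' wt'"
  shows "card V' = card V \<and> sum wt' V' = sum wt V \<and> card E' = card E"
proof -
  have SG: "simple_graph V E" using forest_sg[OF F] .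
  have SG': "simple_graph V' E'" using forest_sg[OF F'] .
  have finV: "finite V" using sg_finite[OF SG] .
  have finV': "finite V'" using sg_finite[OF SG'] .
  define n where "n = card V"
  define L where "L = card E"
  have "L = 0 \<or> n > 0"
  proof (cases "E = {}")
    case True then show ?thesis unfolding L_def by simp
  next
    case False
    then obtain e where "e \<in> E" by blast
    then obtain u v where "u \<in> V" using edge_form[OF SG] by blast
    then have "V \<noteq> {}" by auto
    then show ?thesis using finV unfolding n_def by (simp add: card_gt_0_iff)
  qed
  then have "(n + 1) ^ (n - L) * ((n + 1) - 1) ^ L > 0" by auto
  then have "card (SS V E wt (n+1) 0 (card V) (sum wt V)) > 0"
    unfolding SS_full[OF F] n_def L_def by simp
  then have "card (SS V' E' wt' (n+1) 0 (card V) (sum wt V)) > 0"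
    using SS_transfer[OF finV finV' cm] by simp
  then have nn: "card V' = card V \<and> sum wt' V' = sum wt V" by (rule SS_other_pos[OF SG'])
  have "card (SS V E wt 2 0 (card V) (sum wt V)) = card (SS V' E' wt' 2 0 (card V) (sum wt V))"
    using SS_transfer[OF finV finV' cm] by simp
  then have "card (SS V E wt 2 0 (card V) (sum wt V)) = card (SS V' E' wt' 2 0 (card V') (sum wt' V'))"
    using nn by simp
  then have "(2::nat) ^ (card V - card E) = 2 ^ (card V' - card E')"
    unfolding SS_full[OF F] SS_full[OF F'] by simp
  then have "card V - card E = card V' - card E'" by simp
  moreover have "card E \<le> card V"
  proof -
    have "int_edges E V \<le> card V" using chrom_forest[OF F, of "{}::nat set" V] by blast
    then show ?thesis using int_edges_V[OF SG] by simp
  qed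
  moreover have "card E' \<le> card V'"
  proof -
    have "int_edges E' V' \<le> card V'" using chrom_forest[OF F', of "{}::nat set" V'] by blast
    then show ?thesis using int_edges_V[OF SG'] by simp
  qed
  ultimately show ?thesis using nn by linarith
qed

lemma pw:
  assumes "1 \<le> r" "i \<le> t"
  shows "real (r ^ (t - i) * (r - 1) ^ i) = real r ^ t * ((real r - 1) / real r) ^ i"
proof -
  have r0: "real r ^ i \<noteq> 0" using assms by simp
  have a: "real (r ^ (t - i) * (r - 1) ^ i) = real r ^ (t - i) * (real r - 1) ^ i"
    using assms(1) by (simp add: of_nat_diff)
  have b: "real r ^ t = real r ^ (t - i) * real r ^ i"
    using assms(2) by (metis le_add_diff_inverse2 power_add)
  have "real r ^ t * ((real r - 1) / real r) ^ i = real r ^ (t - i) * real r ^ i * ((real r - 1) ^ i / real r ^ i)"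
    by (simp only: b power_divide)
  also have "\<dots> = real r ^ (t - i) * (real r - 1) ^ i"
  proof -
    have gen: "y \<noteq> 0 \<Longrightarrow> x * y * (z / y) = x * z" for x y z :: real by simp
    show ?thesis using gen[OF r0] .
  qed
  finally show ?thesis using a by simp
qed

lemma group2:
  fixes h :: "nat \<Rightarrow> nat \<Rightarrow> real"
  assumes finX: "finite X" and bd: "\<And>A. A \<in> X \<Longrightarrow> f A \<le> L \<and> g A \<le> L"
  shows "(\<Sum>A\<in>X. h (f A) (g A)) = (\<Sum>i\<le>L. \<Sum>j\<le>L. real (card {A\<in>X. f A = i \<and> g A = j}) * h i j)"
proof -
  have "(\<Sum>A\<in>X. h (f A) (g A)) = (\<Sum>i\<le>L. \<Sum>A\<in>{A\<in>X. f A = i}. h (f A) (g A))"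
    by (rule sum.group[symmetric]) (use finX bd in auto)
  also have "\<dots> = (\<Sum>i\<le>L. \<Sum>j\<le>L. \<Sum>A\<in>{A\<in>{A\<in>X. f A = i}. g A = j}. h (f A) (g A))"
    by (rule sum.cong[OF refl], rule sum.group[symmetric]) (use finX bd in auto)
  also have "\<dots> = (\<Sum>i\<le>L. \<Sum>j\<le>L. real (card {A\<in>X. f A = i \<and> g A = j}) * h i j)"
  proof (intro sum.cong refl)
    fix i j
    have e: "{A\<in>{A\<in>X. f A = i}. g A = j} = {A\<in>X. f A = i \<and> g A = j}" by auto
    have "(\<Sum>A\<in>{A\<in>X. f A = i \<and> g A = j}. h (f A) (g A)) = (\<Sum>A\<in>{A\<in>X. f A = i \<and> g A = j}. h i j)"
      by (rule sum.cong) auto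
    then show "(\<Sum>A\<in>{A\<in>{A\<in>X. f A = i}. g A = j}. h (f A) (g A)) = real (card {A\<in>X. f A = i \<and> g A = j}) * h i j"
      unfolding e by simp
  qed
  finally show ?thesis .
qed

lemma poly_ext:
  fixes a b :: "nat \<Rightarrow> real"
  assumes inf: "infinite S" and eq: "\<And>x. x \<in> S \<Longrightarrow> (\<Sum>i\<le>n. a i * x ^ i) = (\<Sum>i\<le>n. b i * x ^ i)"
  shows "\<forall>i\<le>n. a i = b i"
proof (rule ccontr)
  assume "\<not> (\<forall>i\<le>n. a i = b i)"
  then have "\<exists>i\<le>n. (\<lambda>i. a i - b i) i \<noteq> 0" by auto
  then have fin: "finite {x. (\<Sum>i\<le>n. (a i - b i) * x ^ i) = 0}" by (rule polyfun_finite_roots[THEN iffD2])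
  have "S \<subseteq> {x. (\<Sum>i\<le>n. (a i - b i) * x ^ i) = 0}"
  proof
    fix x assume "x \<in> S"
    then have "(\<Sum>i\<le>n. a i * x ^ i) - (\<Sum>i\<le>n. b i * x ^ i) = 0" using eq by simp
    moreover have "(\<Sum>i\<le>n. (a i - b i) * x ^ i) = (\<Sum>i\<le>n. a i * x ^ i) - (\<Sum>i\<le>n. b i * x ^ i)"
      by (simp only: left_diff_distrib sum_subtractf)
    ultimately show "x \<in> {x. (\<Sum>i\<le>n. (a i - b i) * x ^ i) = 0}" by simp
  qed
  then show False using fin inf finite_subset by blast
qed

definition SU :: "real set" where "SU = (\<lambda>r::nat. (real r - 1) / real r) ` {1..}"

lemma SU_infinite: "infinite SU"
proof
  assume finS: "finite SU"
  have inj: "inj_on (\<lambda>r::nat. (real r - 1) / real r) {1..}"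
  proof (rule inj_onI)
    fix x y :: nat assume x: "x \<in> {1..}" and y: "y \<in> {1..}" and e: "(real x - 1) / real x = (real y - 1) / real y"
    have xn: "real x \<noteq> 0" and yn: "real y \<noteq> 0" using x y by auto
    have "(real x - 1) / real x = 1 - 1 / real x" by (metis diff_divide_distrib divide_self xn)
    moreover have "(real y - 1) / real y = 1 - 1 / real y" by (metis diff_divide_distrib divide_self yn)
    ultimately have "1 / real x = 1 / real y" using e by (metis diff_left_imp_eq)
    then have "real x = real y" using divide_cancel_left[of 1 "real x" "real y"] by (metis one_neq_zero)
    then show "x = y" by (metis of_nat_eq_iff)
  qed
  have "finite {1::nat..}" by (rule finite_imageD[OF finS[unfolded SU_def] inj])
  then show False using infinite_Ici by blast
qed

lemma two_var_ext:
  fixes K K' :: "nat \<Rightarrow> nat \<Rightarrow> real"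
  assumes eq: "\<And>u v. u \<in> SU \<Longrightarrow> v \<in> SU \<Longrightarrow>
     (\<Sum>i\<le>L. \<Sum>j\<le>L. K i j * (u ^ i * v ^ j)) = (\<Sum>i\<le>L. \<Sum>j\<le>L. K' i j * (u ^ i * v ^ j))"
  shows "\<forall>i\<le>L. \<forall>j\<le>L. K i j = K' i j"
proof (intro allI impI)
  fix i j assume i: "i \<le> L" and j: "j \<le> L"
  have rew: "(\<Sum>i\<le>L. \<Sum>j\<le>L. K i j * (u ^ i * v ^ j)) = (\<Sum>i\<le>L. (\<Sum>j\<le>L. K i j * v ^ j) * u ^ i)" for K :: "nat \<Rightarrow> nat \<Rightarrow> real" and u v
    unfolding sum_distrib_right by (intro sum.cong refl) (simp only: mult_ac)
  have H: "\<forall>i\<le>L. (\<Sum>j\<le>L. K i j * v ^ j) = (\<Sum>j\<le>L. K' i j * v ^ j)" if v: "v \<in> SU" for v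
  proof (rule poly_ext[OF SU_infinite])
    fix u assume u: "u \<in> SU"
    have "(\<Sum>i\<le>L. (\<Sum>j\<le>L. K i j * v ^ j) * u ^ i) = (\<Sum>i\<le>L. (\<Sum>j\<le>L. K' i j * v ^ j) * u ^ i)"
      using eq[OF u v] unfolding rew[of K u v] rew[of K' u v] .
    then show "(\<Sum>i\<le>L. (\<Sum>j\<le>L. K i j * v ^ j) * u ^ i) = (\<Sum>i\<le>L. (\<Sum>j\<le>L. K' i j * v ^ j) * u ^ i)" .
  qed
  have "\<forall>j\<le>L. K i j = K' i j"
  proof (rule poly_ext[OF SU_infinite])
    fix v assume v: "v \<in> SU"
    show "(\<Sum>j\<le>L. K i j * v ^ j) = (\<Sum>j\<le>L. K' i j * v ^ j)" using H[OF v] i by blast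
  qed
  then show "K i j = K' i j" using j by simp
qed

lemma real_SS:
  assumes F: "forest V E" and r1: "1 \<le> r1" and r2: "1 \<le> r2"
  shows "real (card (SS V E wt r1 r2 b w)) = real r1 ^ b * real r2 ^ (card V - b) *
     (\<Sum>i\<le>card E. \<Sum>j\<le>card E. real (KK V E wt b w i j) *
         (((real r1 - 1) / real r1) ^ i * ((real r2 - 1) / real r2) ^ j))"
proof -
  have SG: "simple_graph V E" using forest_sg[OF F] .
  have finV: "finite V" using sg_finite[OF SG] .
  define u where "u = (real r1 - 1) / real r1"
  define v where "v = (real r2 - 1) / real r2"
  have "real (card (SS V E wt r1 r2 b w)) = (\<Sum>A\<in>AA V wt b w. real r1 ^ b * real r2 ^ (card V - b) *
      (u ^ int_edges E A * v ^ int_edges E (V - A)))"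
    unfolding SS_formula[OF F] of_nat_sum
  proof (rule sum.cong[OF refl])
    fix A assume A: "A \<in> AA V wt b w"
    then have AV: "A \<subseteq> V" and cA: "card A = b" unfolding AA_def by auto
    have i: "int_edges E A \<le> b" using chrom_forest[OF F, of "{}::nat set" A] AV cA by simp
    have cVA: "card (V - A) = card V - b" using AV cA finV by (simp add: card_Diff_subset finite_subset)
    have j: "int_edges E (V - A) \<le> card V - b" using chrom_forest[OF F, of "{}::nat set" "V - A"] cVA by simp
    show "real (r1 ^ (b - int_edges E A) * (r1 - 1) ^ int_edges E A *
          (r2 ^ (card V - b - int_edges E (V - A)) * (r2 - 1) ^ int_edges E (V - A))) =
        real r1 ^ b * real r2 ^ (card V - b) * (u ^ int_edges E A * v ^ int_edges E (V - A))"
    proof -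
      define X where "X = r1 ^ (b - int_edges E A) * (r1 - 1) ^ int_edges E A"
      define Y where "Y = r2 ^ (card V - b - int_edges E (V - A)) * (r2 - 1) ^ int_edges E (V - A)"
      have "real (X * Y) = real X * real Y" by (rule of_nat_mult)
      also have "\<dots> = (real r1 ^ b * u ^ int_edges E A) * (real r2 ^ (card V - b) * v ^ int_edges E (V - A))"
        unfolding X_def Y_def u_def v_def pw[OF r1 i] pw[OF r2 j] ..
      also have "\<dots> = real r1 ^ b * real r2 ^ (card V - b) * (u ^ int_edges E A * v ^ int_edges E (V - A))"
        by (simp only: mult_ac)
      finally show ?thesis unfolding X_def Y_def mult.assoc .
    qed
  qed
  also have "\<dots> = real r1 ^ b * real r2 ^ (card V - b) * (\<Sum>A\<in>AA V wt b w. u ^ int_edges E A * v ^ int_edges E (V - A))"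
    by (simp add: sum_distrib_left)
  also have "(\<Sum>A\<in>AA V wt b w. u ^ int_edges E A * v ^ int_edges E (V - A)) =
      (\<Sum>i\<le>card E. \<Sum>j\<le>card E. real (KK V E wt b w i j) * (u ^ i * v ^ j))"
    unfolding KK_def
    by (rule group2[where h="\<lambda>i j. u ^ i * v ^ j"]) (use finite_AA[OF finV] int_le_E[OF SG] in auto)
  finally show ?thesis unfolding u_def v_def .
qed

lemma KK_eq:
  assumes F: "forest V E" and F': "forest V' E'"
    and cm: "chromatic_macmahon V E wt = chromatic_macmahon V' E' wt'"
  shows "\<forall>i\<le>card E. \<forall>j\<le>card E. real (KK V E wt b w i j) = real (KK V' E' wt' b w i j)"
proof (rule two_var_ext)
  fix u v assume u: "u \<in> SU" and v: "v \<in> SU"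
  obtain r1 :: nat where r1: "1 \<le> r1" and u': "u = (real r1 - 1) / real r1" using u unfolding SU_def by auto
  obtain r2 :: nat where r2: "1 \<le> r2" and v': "v = (real r2 - 1) / real r2" using v unfolding SU_def by auto
  have SG: "simple_graph V E" using forest_sg[OF F] .
  have SG': "simple_graph V' E'" using forest_sg[OF F'] .
  have finV: "finite V" using sg_finite[OF SG] .
  have finV': "finite V'" using sg_finite[OF SG'] .
  have sz: "card V' = card V" "card E' = card E" using sizes_eq[OF F F' cm] by auto
  have "real (card (SS V E wt r1 r2 b w)) = real (card (SS V' E' wt' r1 r2 b w))"
    using SS_transfer[OF finV finV' cm] by simp
  then have "real r1 ^ b * real r2 ^ (card V - b) *
     (\<Sum>i\<le>card E. \<Sum>j\<le>card E. real (KK V E wt b w i j) * (u ^ i * v ^ j)) =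
     real r1 ^ b * real r2 ^ (card V - b) *
     (\<Sum>i\<le>card E. \<Sum>j\<le>card E. real (KK V' E' wt' b w i j) * (u ^ i * v ^ j))"
    unfolding real_SS[OF F r1 r2] real_SS[OF F' r1 r2] sz u' v' .
  moreover have nz: "real r1 ^ b * real r2 ^ (card V - b) \<noteq> 0" using r1 r2 by simp
  ultimately show "(\<Sum>i\<le>card E. \<Sum>j\<le>card E. real (KK V E wt b w i j) * (u ^ i * v ^ j)) =
     (\<Sum>i\<le>card E. \<Sum>j\<le>card E. real (KK V' E' wt' b w i j) * (u ^ i * v ^ j))"
    by (simp only: mult_left_cancel[OF nz])
qed

lemma edge_cases:
  assumes "x \<noteq> y"
  shows "(card ({x,y} \<inter> A) = 1) = ((x \<in> A) \<noteq> (y \<in> A))"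
proof (cases "x \<in> A")
  case True
  then show ?thesis
  proof (cases "y \<in> A")
    case True
    then have "{x,y} \<inter> A = {x,y}" using \<open>x \<in> A\<close> by auto
    then show ?thesis using assms True \<open>x \<in> A\<close> by simp
  next
    case False
    then have "{x,y} \<inter> A = {x}" using \<open>x \<in> A\<close> by auto
    then show ?thesis using False \<open>x \<in> A\<close> by simp
  qed
next
  case False
  then show ?thesis
  proof (cases "y \<in> A")
    case True
    then have "{x,y} \<inter> A = {y}" using \<open>x \<notin> A\<close> by auto
    then show ?thesis using True \<open>x \<notin> A\<close> by simp
  next
    case False
    then have e: "{x,y} \<inter> A = {}" using \<open>x \<notin> A\<close> by auto
    show ?thesis unfolding e using False \<open>x \<notin> A\<close> by simp
  qed
qed

lemma edge_partition:
  assumes SG: "simple_graph V E" and AV: "A \<subseteq> V"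
  shows "ext_edges E A + int_edges E A + int_edges E (V - A) = card E"
proof -
  have finE: "finite E" using sg_finite_E[OF SG] .
  define X where "X = {e \<in> E. card (e \<inter> A) = 1}"
  define Y where "Y = {e \<in> E. e \<subseteq> A}"
  define Z where "Z = {e \<in> E. e \<subseteq> V - A}"
  have cls: "(e \<in> X \<and> e \<notin> Y \<and> e \<notin> Z) \<or> (e \<notin> X \<and> e \<in> Y \<and> e \<notin> Z) \<or> (e \<notin> X \<and> e \<notin> Y \<and> e \<in> Z)"
    if e: "e \<in> E" for e
  proof -
    obtain x y where xy: "x \<in> V" "y \<in> V" "x \<noteq> y" "e = {x,y}" using edge_form[OF SG e] by blast
    have c: "(card (e \<inter> A) = 1) = ((x \<in> A) \<noteq> (y \<in> A))" using edge_cases[OF xy(3)] xy(4) by simp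
    show ?thesis unfolding X_def Y_def Z_def using c xy e by auto
  qed
  have "X \<subseteq> E" "Y \<subseteq> E" "Z \<subseteq> E" unfolding X_def Y_def Z_def by auto
  then have EU: "E = X \<union> Y \<union> Z" using cls by blast
  have d1: "X \<inter> Y = {}" using cls unfolding X_def Y_def Z_def by blast
  have d2: "(X \<union> Y) \<inter> Z = {}" using cls unfolding X_def Y_def Z_def by blast
  have fX: "finite X" "finite Y" "finite Z" using finE unfolding X_def Y_def Z_def by auto
  have "card E = card (X \<union> Y) + card Z" unfolding EU by (rule card_Un_disjoint) (use fX d2 in auto)
  also have "card (X \<union> Y) = card X + card Y" by (rule card_Un_disjoint) (use fX d1 in auto)
  finally show ?thesis unfolding ext_edges_def int_edges_def X_def Y_def Z_def by simp
qed

lemma egdp_KK: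
  assumes SG: "simple_graph V E"
  shows "ext_gen_degree_poly V E wt (a, b, c, d) =
    (if d + a \<le> card E then KK V E wt b c d (card E - d - a) else 0)"
proof -
  have D: "ext_gen_degree_poly V E wt (a, b, c, d) =
     card {A. A \<subseteq> V \<and> ext_edges E A = a \<and> card A = b \<and> sum wt A = c \<and> int_edges E A = d}"
    unfolding ext_gen_degree_poly_def by simp
  have S: "{A. A \<subseteq> V \<and> ext_edges E A = a \<and> card A = b \<and> sum wt A = c \<and> int_edges E A = d}
     = {A \<in> AA V wt b c. int_edges E A = d \<and> int_edges E (V - A) + d + a = card E}"
  proof (rule set_eqI)
    fix A
    show "A \<in> {A. A \<subseteq> V \<and> ext_edges E A = a \<and> card A = b \<and> sum wt A = c \<and> int_edges E A = d} \<longleftrightarrow>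
      A \<in> {A \<in> AA V wt b c. int_edges E A = d \<and> int_edges E (V - A) + d + a = card E}"
    proof (cases "A \<subseteq> V")
      case True
      have "ext_edges E A + int_edges E A + int_edges E (V - A) = card E" by (rule edge_partition[OF SG True])
      then show ?thesis unfolding AA_def using True by auto
    next
      case False
      then show ?thesis unfolding AA_def by auto
    qed
  qed
  show ?thesis
  proof (cases "d + a \<le> card E")
    case True
    have "{A \<in> AA V wt b c. int_edges E A = d \<and> int_edges E (V - A) + d + a = card E}
       = {A \<in> AA V wt b c. int_edges E A = d \<and> int_edges E (V - A) = card E - d - a}"
      using True by auto
    then show ?thesis unfolding D KK_def S using True by simp
  next
    case False
    then have e: "{A \<in> AA V wt b c. int_edges E A = d \<and> int_edges E (V - A) + d + a = card E} = {}" by auto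
    show ?thesis unfolding D S e using False by simp
  qed
qed

theorem theorem1p1:
  fixes V :: "'a set" and E :: "'a set set" and wt :: "'a \<Rightarrow> nat"
    and V' :: "'b set" and E' :: "'b set set" and wt' :: "'b \<Rightarrow> nat"
  assumes "weighted_forest V E wt"
    and "weighted_forest V' E' wt'"
    and "chromatic_macmahon V E wt = chromatic_macmahon V' E' wt'"
  shows "ext_gen_degree_poly V E wt = ext_gen_degree_poly V' E' wt'"
proof
  fix p :: "nat \<times> nat \<times> nat \<times> nat"
  obtain a b c d where p: "p = (a, b, c, d)" by (cases p) auto
  have F: "forest V E" and F': "forest V' E'" using assms unfolding weighted_forest_def by auto
  have cm: "chromatic_macmahon V E wt = chromatic_macmahon V' E' wt'" using assms by simp
  have SG: "simple_graph V E" using forest_sg[OF F] .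
  have SG': "simple_graph V' E'" using forest_sg[OF F'] .
  have sz: "card E' = card E" using sizes_eq[OF F F' cm] by auto
  have K: "KK V E wt b c d (card E - d - a) = KK V' E' wt' b c d (card E - d - a)" if "d + a \<le> card E"
  proof -
    have "d \<le> card E" "card E - d - a \<le> card E" using that by auto
    then have "real (KK V E wt b c d (card E - d - a)) = real (KK V' E' wt' b c d (card E - d - a))"
      using KK_eq[OF F F' cm, of b c] by blast
    then show ?thesis by (simp only: of_nat_eq_iff)
  qed
  show "ext_gen_degree_poly V E wt p = ext_gen_degree_poly V' E' wt' p"
    unfolding p egdp_KK[OF SG] egdp_KK[OF SG'] sz using K by simp
qed

end
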